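(* Let $\varphi\colon[\mathbb{F}_2,\mathbb{F}_2]\to\mathbb{Z}$ be the homomorphism defined below. If $g\in[\mathbb{F}_2,\mathbb{F}_2]$ is a product of two squares in $\mathbb{F}_2$ (i.e. $g=a^2b^2$ with $a,b\in\mathbb{F}_2$), then $\varphi(g)$ is even.
   Context: $\mathbb{F}_2$ is the free group on $x,y$. Let $\tilde K$ be the graph with vertex set $\mathbb{Z}^2$ and oriented edges $x^iy^jX$ from $(i,j)$ to $(i+1,j)$ and $x^iy^jY$ from $(i,j)$ to $(i,j+1)$ (the universal abelian cover of the wedge of two circles). A $1$-chain is written $\alpha=P_\alpha(x,y)X+Q_\alpha(x,y)Y$ with $P_\alpha,Q_\alpha$ integer Laurent polynomials (the coefficient of $x^iy^j$ in $P_\alpha$ is the coefficient of the edge $x^iy^jX$, similarly for $Q_\alpha$). For $g\in[\mathbb{F}_2,\mathbb{F}_2]$ written as a word in $x^{\pm1},y^{\pm1}$, the associated cycle $\alpha_g$ is the $1$-cycle traced by the lattice path starting at $(0,0)$ in which a letter $x$ (resp. $x^{-1}$, $y$, $y^{-1}$) moves by $(1,0)$ (resp. $(-1,0)$, $(0,1)$, $(0,-1)$) along the corresponding edge, each edge counted with sign $+1$ if traversed in its orientation and $-1$ otherwise; its homology class depends only on $g$. Let $f_\alpha(y)=P_\alpha(1,y)$. Define $\varphi(g)=f_{\alpha_g}'(1)$; this is a homomorphism $[\mathbb{F}_2,\mathbb{F}_2]\to\mathbb{Z}$. *)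

theory Defs
  imports "HOL-Analysis.Analysis"
begin

text \<open>Letters of the free group F_2 on x, y: x, x^-1, y, y^-1.
  Elements of F_2 are represented by (not necessarily reduced) words;
  multiplication is concatenation.\<close>

datatype letter = Lx | Lxi | Ly | Lyi

type_synonym word = "letter list"

text \<open>Abelianization F_2 -> Z^2 (exponent sums). In the free group F_2,
  the commutator subgroup is exactly the kernel of the abelianization map.\<close>

fun expx :: "letter \<Rightarrow> int" where
  "expx Lx = 1" | "expx Lxi = -1" | "expx Ly = 0" | "expx Lyi = 0"

fun expy :: "letter \<Rightarrow> int" where
  "expy Lx = 0" | "expy Lxi = 0" | "expy Ly = 1" | "expy Lyi = -1"

definition in_commutator :: "word \<Rightarrow> bool" where
  "in_commutator w \<longleftrightarrow> sum_list (map expx w) = 0 \<and> sum_list (map expy w) = 0"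

text \<open>Edges traversed by the lattice path of a word starting at a point:
  (is an X-edge, base point of the edge, sign of traversal).\<close>

fun edges :: "int \<times> int \<Rightarrow> word \<Rightarrow> (bool \<times> (int \<times> int) \<times> int) list" where
  "edges p [] = []"
| "edges (i,j) (Lx # w) = (True, (i,j), 1) # edges (i+1, j) w"
| "edges (i,j) (Lxi # w) = (True, (i-1,j), -1) # edges (i-1, j) w"
| "edges (i,j) (Ly # w) = (False, (i,j), 1) # edges (i, j+1) w"
| "edges (i,j) (Lyi # w) = (False, (i,j-1), -1) # edges (i, j-1) w"

text \<open>Coefficient of the edge x^i y^j X in the cycle alpha_g (i.e. coefficient of x^i y^j in P_alpha).\<close>

definition coeffP :: "word \<Rightarrow> int \<times> int \<Rightarrow> int" where
  "coeffP w q = sum_list [s. (b, q', s) \<leftarrow> edges (0,0) w, b \<and> q' = q]"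

definition coeffQ :: "word \<Rightarrow> int \<times> int \<Rightarrow> int" where
  "coeffQ w q = sum_list [s. (b, q', s) \<leftarrow> edges (0,0) w, \<not> b \<and> q' = q]"

text \<open>Base points of X-edges occurring in the path: a finite set containing the support of P_alpha.\<close>

definition Xpts :: "word \<Rightarrow> (int \<times> int) set" where
  "Xpts w = {q. \<exists>s. (True, q, s) \<in> set (edges (0,0) w)}"

definition P_eval :: "word \<Rightarrow> real \<Rightarrow> real \<Rightarrow> real" where
  "P_eval w x y = (\<Sum>q\<in>Xpts w. of_int (coeffP w q) * x powi fst q * y powi snd q)"

definition f_alpha :: "word \<Rightarrow> real \<Rightarrow> real" where
  "f_alpha w y = P_eval w 1 y"

definition phi :: "word \<Rightarrow> real" where
  "phi w = deriv (f_alpha w) 1"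

end

theory Submission
  imports Defs
begin

definition PhiL :: "(bool \<times> (int \<times> int) \<times> int) list \<Rightarrow> int" where
  "PhiL L = sum_list (map (\<lambda>(b,q,s). if b then s * snd q else 0) L)"

lemma PhiL_simps[simp]:
  "PhiL [] = 0"
  "PhiL ((b,q,s) # L) = (if b then s * snd q else 0) + PhiL L"
  "PhiL (L1 @ L2) = PhiL L1 + PhiL L2"
  by (simp_all add: PhiL_def)

definition ex :: "word \<Rightarrow> int" where "ex w = sum_list (map expx w)"
definition ey :: "word \<Rightarrow> int" where "ey w = sum_list (map expy w)"

lemma edges_append:
  "edges (i,j) (u @ v) = edges (i,j) u @ edges (i + ex u, j + ey u) v"
proof (induction u arbitrary: i j)
  case Nil
  then show ?case by (simp add: ex_def ey_def)
next
  case (Cons l u)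
  show ?case
    by (cases l) (simp_all add: Cons ex_def ey_def algebra_simps)
qed

lemma PhiL_shift:
  "PhiL (edges (i,j) w) = PhiL (edges (0,0) w) + j * ex w"
proof (induction w arbitrary: i j)
  case Nil
  then show ?case by (simp add: ex_def)
next
  case (Cons l w)
  show ?case
  proof (cases l)
    case Lx
    then show ?thesis using Cons[of "i+1" j] Cons[of 1 0] by (simp add: ex_def algebra_simps)
  next
    case Lxi
    then show ?thesis using Cons[of "i-1" j] Cons[of "-1" 0] by (simp add: ex_def algebra_simps)
  next
    case Ly
    then show ?thesis using Cons[of i "j+1"] Cons[of 0 1] by (simp add: ex_def algebra_simps)
  next
    case Lyi
    then show ?thesis using Cons[of i "j-1"] Cons[of 0 "-1"] by (simp add: ex_def algebra_simps)
  qed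
qed

lemma regroup:
  fixes L :: "(bool \<times> (int \<times> int) \<times> int) list"
  assumes "finite S" "\<And>q s. (True, q, s) \<in> set L \<Longrightarrow> q \<in> S"
  shows "(\<Sum>q\<in>S. of_int (sum_list [s. (b, q', s) \<leftarrow> L, b \<and> q' = q]) * (of_int (snd q) :: real))
         = of_int (sum_list (map (\<lambda>(b,q,s). if b then s * snd q else 0) L))" 
  using assms
proof (induction L)
  case Nil
  then show ?case by simp
next
  case (Cons e L)
  obtain b q0 s0 where e: "e = (b,q0,s0)" by (cases e) auto
  have IH: "(\<Sum>q\<in>S. of_int (sum_list [s. (b, q', s) \<leftarrow> L, b \<and> q' = q]) * (of_int (snd q) :: real))
         = of_int (sum_list (map (\<lambda>(b,q,s). if b then s * snd q else 0) L))"
    using Cons by auto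
  show ?case
  proof (cases b)
    case True
    have q0S: "q0 \<in> S" using Cons.prems(2)[of q0 s0] e True by auto
    have "(\<Sum>q\<in>S. of_int (sum_list [s. (b, q', s) \<leftarrow> e # L, b \<and> q' = q]) * (of_int (snd q) :: real))
      = (\<Sum>q\<in>S. (if q0 = q then of_int s0 * of_int (snd q) else 0)
          + of_int (sum_list [s. (b, q', s) \<leftarrow> L, b \<and> q' = q]) * (of_int (snd q) :: real))"
      by (rule sum.cong) (auto simp: e True algebra_simps)
    also have "\<dots> = of_int s0 * of_int (snd q0) + (\<Sum>q\<in>S. of_int (sum_list [s. (b, q', s) \<leftarrow> L, b \<and> q' = q]) * (of_int (snd q) :: real))"
      using q0S Cons.prems(1) by (simp add: sum.distrib)
    finally show ?thesis using IH e True by simp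
  next
    case False
    then show ?thesis using IH e by simp
  qed
qed

lemma phi_eq: "phi w = of_int (PhiL (edges (0,0) w))"
proof -
  let ?c = "\<lambda>q. of_int (coeffP w q) :: real"
  have fin: "finite (Xpts w)"
  proof -
    have "Xpts w \<subseteq> (\<lambda>(b,q,s). q) ` set (edges (0,0) w)"
      unfolding Xpts_def by force
    then show ?thesis using finite_subset by blast
  qed
  have f: "f_alpha w = (\<lambda>y. \<Sum>q\<in>Xpts w. ?c q * y powi snd q)"
    by (simp add: f_alpha_def P_eval_def fun_eq_iff)
  have d: "(f_alpha w has_real_derivative (\<Sum>q\<in>Xpts w. ?c q * (of_int (snd q) * 1 powi (snd q - 1) * 1))) (at 1)"
    unfolding f
    by (intro DERIV_sum DERIV_cmult DERIV_power_int DERIV_ident) simp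
  hence "phi w = (\<Sum>q\<in>Xpts w. ?c q * of_int (snd q))"
    unfolding phi_def using DERIV_imp_deriv by fastforce
  also have "\<dots> = of_int (PhiL (edges (0,0) w))"
    unfolding coeffP_def PhiL_def
    by (rule regroup[OF fin]) (auto simp: Xpts_def)
  finally show ?thesis .
qed

theorem lemma2p3:
  fixes a b :: word
  assumes "in_commutator (a @ a @ b @ b)"
  shows "\<exists>k::int. phi (a @ a @ b @ b) = of_int (2 * k)"
proof -
  have c: "ex a + ex b = 0" "ey a + ey b = 0"
    using assms by (simp_all add: in_commutator_def ex_def ey_def)
  have "PhiL (edges (0,0) (a @ a @ b @ b)) =
     2 * PhiL (edges (0,0) a) + 2 * PhiL (edges (0,0) b)
     + ey a * ex a + 2 * ey a * ex b + (2 * ey a + ey b) * ex b"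
  proof -
    have e: "edges (0,0) (a @ a @ b @ b) = edges (0,0) a @ edges (ex a, ey a) a
       @ edges (ex a + ex a, ey a + ey a) b @ edges (ex a + ex a + ex b, ey a + ey a + ey b) b"
      by (simp add: edges_append ex_def ey_def algebra_simps)
    show ?thesis unfolding e PhiL_simps
      using PhiL_shift[of "ex a" "ey a" a] PhiL_shift[of "ex a + ex a" "ey a + ey a" b]
        PhiL_shift[of "ex a + ex a + ex b" "ey a + ey a + ey b" b]
      by (simp add: algebra_simps)
  qed
  also have "\<dots> = 2 * (PhiL (edges (0,0) a) + PhiL (edges (0,0) b) + ey a * ex a + 2 * ey a * ex b)"
  proof -
    have "ey b = - ey a" "ex b = - ex a" using c by auto
    then show ?thesis by (simp add: algebra_simps)
  qed
  finally have "PhiL (edges (0,0) (a @ a @ b @ b)) = 2 * (PhiL (edges (0,0) a) + PhiL (edges (0,0) b) + ey a * ex a + 2 * ey a * ex b)" .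
  then have "phi (a @ a @ b @ b) = of_int (2 * (PhiL (edges (0,0) a) + PhiL (edges (0,0) b) + ey a * ex a + 2 * ey a * ex b))"
    by (simp only: phi_eq)
  then show ?thesis by blast
qed

end
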